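(* Let $\mathcal N=\{N_1,\ldots,N_\ell\}$ be a family of $k$-sets satisfying properties (i) and (ii) below with $\ell\ge4$, and fix any run of the decomposition process described in the context, with its stages $0,\ldots,t$, numbers $\ell_0\ge\cdots\ge\ell_t$ and kernel vertices $a_i^{(s)}$. Let $0\le j\le t$, let $1\le i\le \ell_j$, and let $Y\subseteq N_i$ with $|Y|\le j$. Then there exists a $3$-element set $C\subseteq \bigl(N_i\cup\{a_i^{(0)},\ldots,a_i^{(j)}\}\bigr)\setminus Y$ such that $C\cap (V\setminus N_r)\ne\varnothing$ for every $r=1,\ldots,\ell$.
   Context: Setting: $k\ge3$, $\mathcal N=\{N_1,\dots,N_\ell\}$ a family of $k$-subsets, $V=\bigcup N_i$, $n=|V|$, $m=n-k$, satisfying (i) $\bigcap_{i}N_i=\varnothing$ but $\bigcap_{j\ne i}N_j\ne\varnothing$ for all $i$; (ii) every $S\subseteq V$ with $|S|\ge k+1$ contains a $3$-set $T$ not contained in any $N_i$. Assume $\ell\ge4$. Decomposition process: Stage $0$: $\ell_0=\ell$, $\mathcal N^{(0)}=\mathcal N$; for each $i\le\ell_0$ choose $a_i^{(0)}\in\bigcap_{r\ne i}N_r$; kernel $A^{(0)}=\{a_1^{(0)},\dots,a_{\ell_0}^{(0)}\}$. Having defined stages $0,\dots,j$ with $\mathcal N^{(j)}$ consisting of (truncations of) $N_1,\dots,N_{\ell_j}$, $\ell_j\ge4$, and kernels $A^{(0)},\dots,A^{(j)}$, consider the remainder family $R^{(j)}=\{N_r\setminus\bigcup_{s\le j}A^{(s)}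 : 1\le r\le \ell_j\}$, which has empty intersection. If every subfamily of $R^{(j)}$ that is minimal with respect to having empty intersection has only $2$ or $3$ members, stop and set $t=j$. Otherwise choose such a minimal subfamily with at least $4$ members; after reindexing the sets of $\mathcal N$ we may assume it consists of the truncations $N_r^{(j+1)}=N_r\setminus\bigcup_{s\le j}A^{(s)}$, $r=1,\dots,\ell_{j+1}$, with $\ell_{j+1}\ge4$; for each $i\le\ell_{j+1}$ choose $a_i^{(j+1)}\in\bigcap_{r\le\ell_{j+1},r\ne i}N_r^{(j+1)}$ and set $A^{(j+1)}=\{a_1^{(j+1)},\dots,a_{\ell_{j+1}}^{(j+1)}\}$. Thus $\ell=\ell_0\ge\ell_1\ge\dots\ge\ell_t\ge4$, and "$N_i\in\mathcal N^{(j)}$" means $i\le\ell_j$. *)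

theory Defs
  imports Main
begin

definition vertex_set :: "(nat \<Rightarrow> 'a set) \<Rightarrow> nat \<Rightarrow> 'a set" where
  "vertex_set N l = (\<Union>r\<in>{1..l}. N r)"

definition good_family :: "nat \<Rightarrow> (nat \<Rightarrow> 'a set) \<Rightarrow> nat \<Rightarrow> bool" where
  "good_family k N l \<longleftrightarrow>
     (\<forall>r\<in>{1..l}. finite (N r) \<and> card (N r) = k) \<and>
     (\<Inter>r\<in>{1..l}. N r) = {} \<and>
     (\<forall>i\<in>{1..l}. (\<Inter>r\<in>{1..l} - {i}. N r) \<noteq> {}) \<and>
     (\<forall>S. S \<subseteq> vertex_set N l \<and> card S \<ge> k + 1 \<longrightarrow>
        (\<exists>T. T \<subseteq> S \<and> card T = 3 \<and> (\<forall>r\<in>{1..l}. \<not> T \<subseteq> N r)))"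

definition kernel :: "(nat \<Rightarrow> nat \<Rightarrow> 'a) \<Rightarrow> (nat \<Rightarrow> nat) \<Rightarrow> nat \<Rightarrow> 'a set" where
  "kernel a L s = a s ` {1..L s}"

definition trunc :: "(nat \<Rightarrow> 'a set) \<Rightarrow> (nat \<Rightarrow> nat \<Rightarrow> 'a) \<Rightarrow> (nat \<Rightarrow> nat) \<Rightarrow> nat \<Rightarrow> nat \<Rightarrow> 'a set" where
  "trunc N a L j r = N r - (\<Union>s<j. kernel a L s)"

definition min_empty_subfamily :: "(nat \<Rightarrow> 'a set) \<Rightarrow> nat set \<Rightarrow> nat set \<Rightarrow> bool" where
  "min_empty_subfamily F I J \<longleftrightarrow>
     J \<subseteq> I \<and> (\<Inter>r\<in>J. F r) = {} \<and> (\<forall>J'. J' \<subset> J \<longrightarrow> (\<Inter>r\<in>J'. F r) \<noteq> {})"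

text \<open>A run of the decomposition process with stages 0..t, numbers L 0 \<ge> ... \<ge> L t
  and kernel vertices a s i (stage s, index i), the indexing of N being the one
  obtained after all reindexings.\<close>
definition decomposition_run ::
  "(nat \<Rightarrow> 'a set) \<Rightarrow> nat \<Rightarrow> nat \<Rightarrow> (nat \<Rightarrow> nat) \<Rightarrow> (nat \<Rightarrow> nat \<Rightarrow> 'a) \<Rightarrow> bool" where
  "decomposition_run N l t L a \<longleftrightarrow>
     L 0 = l \<and>
     (\<forall>j\<le>t. L j \<ge> 4) \<and>
     (\<forall>j<t. L (Suc j) \<le> L j) \<and>
     (\<forall>j\<le>t. \<forall>i\<in>{1..L j}. a j i \<in> (\<Inter>r\<in>{1..L j} - {i}. trunc N a L j r)) \<and>
     (\<forall>j<t. min_empty_subfamily (trunc N a L (Suc j)) {1..L j} {1..L (Suc j)}) \<and>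
     (\<forall>J. min_empty_subfamily (trunc N a L (Suc t)) {1..L t} J \<longrightarrow>
          card J = 2 \<or> card J = 3)"

end

theory Submission
  imports Defs
begin

lemma L_mono:
  assumes "decomposition_run N l t L a" "s \<le> j" "j \<le> t"
  shows "L j \<le> L s"
  using assms(2,3)
proof (induction j)
  case 0 then show ?case by simp
next
  case (Suc j)
  have d: "L (Suc j) \<le> L j" using assms(1) Suc.prems unfolding decomposition_run_def by auto
  show ?case
  proof (cases "s = Suc j")
    case True then show ?thesis by simp
  next
    case False then show ?thesis using Suc d by simp
  qed
qed

lemma inter_empty:
  assumes "decomposition_run N l t L a" "good_family k N l" "s \<le> t"
  shows "(\<Inter>r\<in>{1..L s}. trunc N a L s r) = {}"
proof (cases s)
  case 0
  have "trunc N a L 0 r = N r" for r unfolding trunc_def by simp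
  then show ?thesis using assms 0 unfolding decomposition_run_def good_family_def by simp
next
  case (Suc s')
  then have "s' < t" using assms(3) by simp
  then have "min_empty_subfamily (trunc N a L (Suc s')) {1..L s'} {1..L (Suc s')}"
    using assms(1) unfolding decomposition_run_def by blast
  then show ?thesis using Suc unfolding min_empty_subfamily_def by simp
qed

lemma a_props:
  assumes run: "decomposition_run N l t L a" and gf: "good_family k N l"
    and st: "s \<le> t" and i: "i \<in> {1..L s}"
  shows "a s i \<notin> N i" "\<And>s'. s' < s \<Longrightarrow> a s i \<notin> kernel a L s'"
    "\<exists>r\<in>{1..L s} - {i}. a s i \<in> N r"
proof -
  have mem: "\<forall>r\<in>{1..L s} - {i}. a s i \<in> trunc N a L s r"
    using run st i unfolding decomposition_run_def by blast
  have L4: "L s \<ge> 4" using run st unfolding decomposition_run_def by blast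
  obtain r0 where r0: "r0 \<in> {1..L s} - {i}"
  proof (cases "i = 1")
    case True then show ?thesis using that[of 2] L4 by auto
  next
    case False then show ?thesis using that[of 1] L4 by auto
  qed
  have r0m: "a s i \<in> trunc N a L s r0" using mem r0 by blast
  then show nk: "\<And>s'. s' < s \<Longrightarrow> a s i \<notin> kernel a L s'" unfolding trunc_def by blast
  show "\<exists>r\<in>{1..L s} - {i}. a s i \<in> N r" using r0 r0m unfolding trunc_def by blast
  show "a s i \<notin> N i"
  proof
    assume "a s i \<in> N i"
    then have "a s i \<in> trunc N a L s i" using nk unfolding trunc_def by blast
    then have "a s i \<in> (\<Inter>r\<in>{1..L s}. trunc N a L s r)" using mem by blast
    then show False using inter_empty[OF run gf st] by blast
  qed
qed

theorem lemma3:
  fixes N :: "nat \<Rightarrow> 'a set" and k l t j i :: nat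
    and L :: "nat \<Rightarrow> nat" and a :: "nat \<Rightarrow> nat \<Rightarrow> 'a" and Y :: "'a set"
  assumes "k \<ge> 3"
    and "good_family k N l"
    and "l \<ge> 4"
    and "decomposition_run N l t L a"
    and "j \<le> t"
    and "i \<in> {1..L j}"
    and "Y \<subseteq> N i"
    and "card Y \<le> j"
  shows "\<exists>C. card C = 3 \<and> C \<subseteq> (N i \<union> {a s i | s. s \<le> j}) - Y \<and>
             (\<forall>r\<in>{1..l}. C \<inter> (vertex_set N l - N r) \<noteq> {})"
proof -
  note run = assms(4) and gf = assms(2)
  have L0: "L 0 = l" using run unfolding decomposition_run_def by blast
  have iL: "i \<in> {1..L s}" if "s \<le> j" for s
    using L_mono[OF run that assms(5)] assms(6) by auto
  have il: "i \<in> {1..l}" using iL[of 0] L0 by simp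
  have Lle: "L s \<le> l" if "s \<le> j" for s
  proof -
    have "L s \<le> L 0" using L_mono[OF run, of 0 s] that assms(5) by simp
    then show ?thesis using L0 by simp
  qed
  define A where "A = {a s i | s. s \<le> j}"
  have Aim: "A = (\<lambda>s. a s i) ` {..j}" unfolding A_def by auto
  have inj: "inj_on (\<lambda>s. a s i) {..j}"
  proof (rule inj_onI)
    fix x y assume x: "x \<in> {..j}" and y: "y \<in> {..j}" and e: "a x i = a y i"
    show "x = y"
    proof (rule ccontr)
      assume "x \<noteq> y"
      then consider "x < y" | "y < x" by linarith
      then show False
      proof cases
        case 1
        have "a x i \<in> kernel a L x" unfolding kernel_def using iL[of x] x by auto
        moreover have "a y i \<notin> kernel a L x"
          using a_props(2)[OF run gf _ iL[of y] 1] y assms(5) by auto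
        ultimately show False using e by simp
      next
        case 2
        have "a y i \<in> kernel a L y" unfolding kernel_def using iL[of y] y by auto
        moreover have "a x i \<notin> kernel a L y"
          using a_props(2)[OF run gf _ iL[of x] 2] x assms(5) by auto
        ultimately show False using e by simp
      qed
    qed
  qed
  have cardA: "card A = Suc j" using Aim card_image[OF inj] by simp
  have finA: "finite A" using Aim by simp
  have AN: "A \<inter> N i = {}" using a_props(1)[OF run gf _ iL] assms(5) unfolding A_def by auto
  have finN: "finite (N i)" and cN: "card (N i) = k" using gf il unfolding good_family_def by auto
  define S where "S = (N i \<union> A) - Y"
  have SE: "S = (N i - Y) \<union> A" unfolding S_def using AN assms(7) by auto
  have finY: "finite Y" using finN assms(7) finite_subset by auto
  have c1: "card (N i - Y) = k - card Y" using card_Diff_subset[OF finY assms(7)] cN by simp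
  have disj: "(N i - Y) \<inter> A = {}" using AN by auto
  have "card S = card (N i - Y) + card A" unfolding SE
    using card_Un_disjoint[OF _ finA disj] finN by simp
  then have cS: "card S \<ge> k + 1" using c1 cardA assms(8) by linarith
  have NV: "N i \<subseteq> vertex_set N l" unfolding vertex_set_def using il by blast
  have AV: "A \<subseteq> vertex_set N l"
  proof
    fix x assume "x \<in> A"
    then obtain s where s: "s \<le> j" "x = a s i" unfolding A_def by auto
    then obtain r where "r \<in> {1..L s} - {i}" "a s i \<in> N r"
      using a_props(3)[OF run gf _ iL[of s]] assms(5) by fastforce
    then show "x \<in> vertex_set N l" unfolding vertex_set_def using s Lle[of s] by auto
  qed
  have SV: "S \<subseteq> vertex_set N l" using NV AV unfolding S_def by blast
  obtain T where T: "T \<subseteq> S" "card T = 3" "\<forall>r\<in>{1..l}. \<not> T \<subseteq> N r"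
  proof -
    have "\<forall>S. S \<subseteq> vertex_set N l \<and> card S \<ge> k + 1 \<longrightarrow>
        (\<exists>T. T \<subseteq> S \<and> card T = 3 \<and> (\<forall>r\<in>{1..l}. \<not> T \<subseteq> N r))"
      using gf unfolding good_family_def by (elim conjE)
    then have "\<exists>T. T \<subseteq> S \<and> card T = 3 \<and> (\<forall>r\<in>{1..l}. \<not> T \<subseteq> N r)"
      using SV cS by blast
    then show ?thesis using that by blast
  qed
  show ?thesis
  proof (intro exI conjI ballI)
    show "card T = 3" by fact
    show "T \<subseteq> (N i \<union> {a s i | s. s \<le> j}) - Y" using T(1) unfolding S_def A_def .
    fix r assume "r \<in> {1..l}"
    then show "T \<inter> (vertex_set N l - N r) \<noteq> {}" using T SV by blast
  qed
qed

end
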